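(* Let $\delta\ge0$ and let $T\in C^1(\mathbb{T}^1)$ be a diffeomorphism with $T'>0$ and rotation number $\rho\in D_\delta$. Suppose $T$ has an invariant probability measure with a continuous positive density $h$, and that for some constant $\sigma\in[0,1+\delta)$ there is $C$ with $|(T^{q_n})'(\xi)-1|\le CE_{n,\sigma}$ for all $n\ge0$, $\xi\in\mathbb{T}^1$. Then there is $C'$ with $|(T^{q_n})'(\xi)-1|\le C'\Delta_n^{\sigma/(1+\delta)}$ for all $n\ge0$, $\xi\in\mathbb{T}^1$, and $h\in C^{\max\{0,\sigma-\delta\}}(\mathbb{T}^1)$.
   Context: An irrational $\rho$ is in $D_\delta$ if there is $C>0$ with $|\rho-p/q|\ge Cq^{-2-\delta}$ for all rationals $p/q$. Write $\rho\in(0,1)$ as a continued fraction $\rho=[k_1,k_2,\dots]$ with convergents $p_n/q_n$, where $p_0=0,q_0=1,p_{-1}=1,q_{-1}=0$, $p_n=k_np_{n-1}+p_{n-2}$, $q_n=k_nq_{n-1}+q_{n-2}$. Set $\Delta_n=|q_n\rho-p_n|$ for $n\ge-1$ (so $\Delta_{-1}=1$), and for $\sigma\ge0$ set $E_{n,\sigma}=\sum_{k=0}^n\frac{\Delta_n}{\Delta_{n-k}}\Delta_{n-k-1}^\sigma$. $C^\alpha$ for $\alpha\in(0,1]$ means $\alpha$-Hölder; $C^0$ means continuous. *)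

theory Defs
  imports "HOL-Analysis.Analysis"
begin

definition diophantine_class :: "real \<Rightarrow> real set" where
  "diophantine_class \<delta> = {\<rho>. \<rho> \<notin> \<rat> \<and>
     (\<exists>C>0. \<forall>(p::int) (q::int). q > 0 \<longrightarrow> \<bar>\<rho> - real_of_int p / real_of_int q\<bar> \<ge> C * real_of_int q powr (-2 - \<delta>))}"

fun cf_rem :: "real \<Rightarrow> nat \<Rightarrow> real" where
  "cf_rem r 0 = r"
| "cf_rem r (Suc n) = frac (1 / cf_rem r n)"

definition cf_digit :: "real \<Rightarrow> nat \<Rightarrow> int" where
  "cf_digit r n = \<lfloor>1 / cf_rem r (n - 1)\<rfloor>"   \<comment> \<open>k_n for n \<ge> 1\<close>

text \<open>Shifted convergents: cf_pq r m = (p_(m-1), q_(m-1)); so cf_pq r 0 = (p_{-1}, q_{-1}) = (1,0).\<close>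
fun cf_pq :: "real \<Rightarrow> nat \<Rightarrow> int \<times> int" where
  "cf_pq r 0 = (1, 0)"
| "cf_pq r (Suc 0) = (0, 1)"
| "cf_pq r (Suc (Suc m)) =
     (cf_digit r (Suc m) * fst (cf_pq r (Suc m)) + fst (cf_pq r m),
      cf_digit r (Suc m) * snd (cf_pq r (Suc m)) + snd (cf_pq r m))"

definition cf_p :: "real \<Rightarrow> nat \<Rightarrow> int" where "cf_p r n = fst (cf_pq r (Suc n))"
definition cf_q :: "real \<Rightarrow> nat \<Rightarrow> int" where "cf_q r n = snd (cf_pq r (Suc n))"

text \<open>cf_Delta_sh r m = Delta_(m-1) = |q_(m-1) r - p_(m-1)|; in particular cf_Delta_sh r 0 = 1.\<close>
definition cf_Delta_sh :: "real \<Rightarrow> nat \<Rightarrow> real" where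
  "cf_Delta_sh r m = \<bar>real_of_int (snd (cf_pq r m)) * r - real_of_int (fst (cf_pq r m))\<bar>"

definition cf_Delta :: "real \<Rightarrow> nat \<Rightarrow> real" where
  "cf_Delta r n = cf_Delta_sh r (Suc n)"

text \<open>E_{n,sigma} = sum_{k=0}^n Delta_n / Delta_(n-k) * Delta_(n-k-1)^sigma.\<close>
definition cf_E :: "real \<Rightarrow> nat \<Rightarrow> real \<Rightarrow> real" where
  "cf_E r n \<sigma> = (\<Sum>k=0..n. cf_Delta_sh r (Suc n) / cf_Delta_sh r (Suc (n - k))
                              * cf_Delta_sh r (n - k) powr \<sigma>)"

text \<open>Rotation number of a circle map given by a lift F (F(x+1) = F x + 1), taken in [0,1).\<close>
definition rotation_number :: "(real \<Rightarrow> real) \<Rightarrow> real" where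
  "rotation_number F = frac (lim (\<lambda>n. (F ^^ n) 0 / real n))"

definition holder_class :: "real \<Rightarrow> (real \<Rightarrow> real) set" where
  "holder_class \<alpha> = (if \<alpha> = 0 then {h. continuous_on UNIV h}
     else {h. \<exists>C. \<forall>x y. \<bar>h x - h y\<bar> \<le> C * \<bar>x - y\<bar> powr \<alpha>})"

end

theory Submission
  imports Defs "HOL-Analysis.Analysis"
begin


lemma frac_irrat:
  assumes "(x::real) \<notin> \<rat>" shows "frac x \<notin> \<rat>" "0 < frac x" "frac x < 1"
proof -
  have e: "frac x = x - of_int \<lfloor>x\<rfloor>" by (simp add: frac_def)
  show ni: "frac x \<notin> \<rat>"
  proof
    assume "frac x \<in> \<rat>"
    then have "frac x + of_int \<lfloor>x\<rfloor> \<in> \<rat>" by (simp add: Rats_add)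
    with assms e show False by simp
  qed
  show "0 < frac x" using ni frac_ge_0[of x] by (metis Rats_0 order_less_le)
  show "frac x < 1" by (rule frac_lt_1)
qed

lemma cf_rem_props:
  assumes "r \<notin> \<rat>" "0 < r" "r < 1"
  shows "cf_rem r n \<notin> \<rat> \<and> 0 < cf_rem r n \<and> cf_rem r n < 1"
proof (induction n)
  case 0 thus ?case using assms by simp
next
  case (Suc n)
  then have "1 / cf_rem r n \<notin> \<rat>"
    by (metis Rats_inverse divide_inverse_commute inverse_eq_divide inverse_inverse_eq mult.right_neutral)
  then show ?case using frac_irrat by simp
qed

lemma cf_digit_ge1:
  assumes "r \<notin> \<rat>" "0 < r" "r < 1"
  shows "cf_digit r (Suc m) \<ge> 1"
proof -
  have "0 < cf_rem r m" "cf_rem r m < 1" using cf_rem_props[OF assms] by auto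
  then have "1 / cf_rem r m \<ge> 1" by simp
  then show ?thesis unfolding cf_digit_def by simp
qed

lemma cf_rem_step:
  assumes "r \<notin> \<rat>" "0 < r" "r < 1"
  shows "1 - of_int (cf_digit r (Suc m)) * cf_rem r m = cf_rem r m * cf_rem r (Suc m)"
proof -
  have p: "0 < cf_rem r m" using cf_rem_props[OF assms] by auto
  have "cf_rem r (Suc m) = 1 / cf_rem r m - of_int (cf_digit r (Suc m))"
    by (simp add: cf_digit_def frac_def)
  then show ?thesis using p by (simp add: field_simps)
qed

definition cfP where "cfP r m = real_of_int (fst (cf_pq r m))"
definition cfQ where "cfQ r m = real_of_int (snd (cf_pq r m))"

lemma cf_signed:
  assumes "r \<notin> \<rat>" "0 < r" "r < 1"
  shows "cfQ r m * r - cfP r m = (-1) ^ (m+1) * (\<Prod>i<m. cf_rem r i)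
       \<and> cfQ r (Suc m) * r - cfP r (Suc m) = (-1) ^ (m+2) * (\<Prod>i<Suc m. cf_rem r i)"
proof (induction m)
  case 0 thus ?case by (simp add: cfP_def cfQ_def)
next
  case (Suc m)
  let ?k = "of_int (cf_digit r (Suc m))"
  have rec: "cfQ r (Suc (Suc m)) * r - cfP r (Suc (Suc m)) =
      ?k * (cfQ r (Suc m) * r - cfP r (Suc m)) + (cfQ r m * r - cfP r m)"
    by (simp add: cfP_def cfQ_def algebra_simps)
  have "?k * ((-1) ^ (m+2) * (\<Prod>i<Suc m. cf_rem r i)) + (-1) ^ (m+1) * (\<Prod>i<m. cf_rem r i)
      = (-1) ^ (m+1) * (\<Prod>i<m. cf_rem r i) * (1 - ?k * cf_rem r m)"
    by (simp add: algebra_simps)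
  also have "\<dots> = (-1) ^ (m+1) * (\<Prod>i<m. cf_rem r i) * (cf_rem r m * cf_rem r (Suc m))"
    by (simp only: cf_rem_step[OF assms, of m])
  also have "\<dots> = (-1) ^ (Suc m + 2) * (\<Prod>i<Suc (Suc m). cf_rem r i)"
    by (simp add: algebra_simps)
  finally show ?case using Suc rec by simp
qed

lemma cf_Delta_prod:
  assumes "r \<notin> \<rat>" "0 < r" "r < 1"
  shows "cf_Delta_sh r m = (\<Prod>i<m. cf_rem r i)"
proof -
  have "cf_Delta_sh r m = \<bar>cfQ r m * r - cfP r m\<bar>" by (simp add: cf_Delta_sh_def cfP_def cfQ_def)
  also have "\<dots> = \<bar>\<Prod>i<m. cf_rem r i\<bar>" using cf_signed[OF assms, of m] by (simp add: abs_mult)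
  also have "\<dots> = (\<Prod>i<m. cf_rem r i)" using cf_rem_props[OF assms]
    by (intro abs_of_nonneg prod_nonneg) (auto intro: less_imp_le)
  finally show ?thesis .
qed

lemma cf_D_pos: assumes "r \<notin> \<rat>" "0 < r" "r < 1" shows "cf_Delta_sh r m > 0"
  using cf_rem_props[OF assms] by (simp add: cf_Delta_prod[OF assms] prod_pos)

lemma cf_D_Suc: assumes "r \<notin> \<rat>" "0 < r" "r < 1"
  shows "cf_Delta_sh r (Suc m) = cf_Delta_sh r m * cf_rem r m"
  by (simp add: cf_Delta_prod[OF assms])

lemma cf_D_dec: assumes "r \<notin> \<rat>" "0 < r" "r < 1"
  shows "cf_Delta_sh r (Suc m) \<le> cf_Delta_sh r m"
  using cf_D_Suc[OF assms, of m] cf_D_pos[OF assms, of m] cf_rem_props[OF assms, of m]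
  by (simp add: mult_left_le)

lemma cf_D_rec2: assumes "r \<notin> \<rat>" "0 < r" "r < 1"
  shows "cf_Delta_sh r (Suc (Suc m)) = cf_Delta_sh r m - of_int (cf_digit r (Suc m)) * cf_Delta_sh r (Suc m)"
proof -
  have "cf_Delta_sh r m - of_int (cf_digit r (Suc m)) * cf_Delta_sh r (Suc m)
     = cf_Delta_sh r m * (1 - of_int (cf_digit r (Suc m)) * cf_rem r m)"
    by (simp add: cf_D_Suc[OF assms] algebra_simps)
  also have "\<dots> = cf_Delta_sh r (Suc (Suc m))"
    by (simp only: cf_rem_step[OF assms, of m]) (simp add: cf_D_Suc[OF assms] algebra_simps)
  finally show ?thesis by simp
qed

lemma half_lemma: assumes "0 < (x::real)" "x < 1" shows "x * frac (1/x) \<le> 1/2"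
proof (cases "x \<le> 1/2")
  case True thus ?thesis using assms frac_lt_1[of "1/x"] frac_ge_0[of "1/x"]
    by (smt (verit) mult_left_le)
next
  case False
  then have "1 < 1/x" "1/x < 2" using assms by (auto simp: field_simps)
  then have "\<lfloor>1/x\<rfloor> = 1" by (simp add: floor_eq_iff)
  then have "frac (1/x) = 1/x - 1" by (simp add: frac_def)
  then show ?thesis using assms False by (simp add: field_simps)
qed

lemma cf_D_half: assumes "r \<notin> \<rat>" "0 < r" "r < 1"
  shows "cf_Delta_sh r (Suc (Suc m)) \<le> cf_Delta_sh r m / 2"
proof -
  have "cf_Delta_sh r (Suc (Suc m)) = cf_Delta_sh r m * (cf_rem r m * frac (1 / cf_rem r m))"
    by (simp add: cf_D_Suc[OF assms])
  also have "\<dots> \<le> cf_Delta_sh r m * (1/2)"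
    using half_lemma cf_rem_props[OF assms, of m] cf_D_pos[OF assms, of m]
    by (intro mult_left_mono) auto
  finally show ?thesis by simp
qed

lemma cf_Q_props: assumes "r \<notin> \<rat>" "0 < r" "r < 1"
  shows "cfQ r m \<ge> 0 \<and> cfQ r (Suc m) \<ge> 1"
proof (induction m)
  case 0 thus ?case by (simp add: cfQ_def)
next
  case (Suc m)
  have "cfQ r (Suc (Suc m)) = of_int (cf_digit r (Suc m)) * cfQ r (Suc m) + cfQ r m"
    by (simp add: cfQ_def)
  moreover have "of_int (cf_digit r (Suc m)) * cfQ r (Suc m) \<ge> 1 * 1"
    using Suc cf_digit_ge1[OF assms, of m] by (intro mult_mono) auto
  ultimately show ?case using Suc by simp
qed

lemma cf_ident: assumes "r \<notin> \<rat>" "0 < r" "r < 1"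
  shows "cfQ r (Suc m) * cf_Delta_sh r m + cfQ r m * cf_Delta_sh r (Suc m) = 1"
proof (induction m)
  case 0 thus ?case by (simp add: cfQ_def cf_Delta_sh_def)
next
  case (Suc m)
  have "cfQ r (Suc (Suc m)) = of_int (cf_digit r (Suc m)) * cfQ r (Suc m) + cfQ r m"
    by (simp add: cfQ_def)
  then have "cfQ r (Suc (Suc m)) * cf_Delta_sh r (Suc m) + cfQ r (Suc m) * cf_Delta_sh r (Suc (Suc m))
     = cfQ r m * cf_Delta_sh r (Suc m) + cfQ r (Suc m) * (cf_Delta_sh r (Suc (Suc m))
        + of_int (cf_digit r (Suc m)) * cf_Delta_sh r (Suc m))"
    by (simp add: algebra_simps)
  also have "\<dots> = cfQ r m * cf_Delta_sh r (Suc m) + cfQ r (Suc m) * cf_Delta_sh r m"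
    using cf_D_rec2[OF assms, of m] by simp
  finally show ?case using Suc by (simp add: algebra_simps)
qed

lemma cf_dioph:
  assumes "r \<in> diophantine_class \<delta>" "0 < r" "r < 1" "\<delta> \<ge> 0"
  shows "\<exists>c>0. \<forall>m. cf_Delta_sh r (Suc m) \<ge> c * cf_Delta_sh r m powr (1 + \<delta>)"
proof -
  have ir: "r \<notin> \<rat>" using assms(1) by (simp add: diophantine_class_def)
  obtain C where C: "C > 0" "\<And>p q. (q::int) > 0 \<Longrightarrow> \<bar>r - of_int p / of_int q\<bar> \<ge> C * of_int q powr (-2 - \<delta>)"
    using assms(1) unfolding diophantine_class_def by blast
  have "cf_Delta_sh r (Suc m) \<ge> C * cf_Delta_sh r m powr (1 + \<delta>)" for m
  proof -
    let ?q = "snd (cf_pq r (Suc m))" let ?p = "fst (cf_pq r (Suc m))"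
    have q1: "of_int ?q \<ge> (1::real)" using cf_Q_props[OF ir assms(2,3), of m] by (simp add: cfQ_def)
    then have qpos: "?q > 0" by simp
    have Dpos: "cf_Delta_sh r m > 0" using cf_D_pos[OF ir assms(2,3)] .
    have "of_int ?q * cf_Delta_sh r m \<le> 1"
      using cf_ident[OF ir assms(2,3), of m] cf_Q_props[OF ir assms(2,3), of m]
        cf_D_pos[OF ir assms(2,3), of "Suc m"] unfolding cfQ_def
      by (smt (verit) mult_nonneg_nonneg)
    then have qle: "of_int ?q \<le> 1 / cf_Delta_sh r m" using Dpos by (simp add: field_simps)
    have eq: "cf_Delta_sh r (Suc m) = of_int ?q * \<bar>r - of_int ?p / of_int ?q\<bar>"
    proof -
      have "of_int ?q * r - of_int ?p = of_int ?q * (r - of_int ?p / of_int ?q)"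
        using q1 by (simp add: field_simps)
      then show ?thesis using q1 by (simp add: cf_Delta_sh_def abs_mult mult.commute)
    qed
    have pw: "of_int ?q * of_int ?q powr (-2 - \<delta>) = of_int ?q powr (- (1 + \<delta>))"
    proof -
      have "of_int ?q powr 1 * of_int ?q powr (-2 - \<delta>) = of_int ?q powr (1 + (-2 - \<delta>))"
        by (rule powr_add[symmetric])
      then show ?thesis using q1 by (simp add: algebra_simps)
    qed
    have "C * cf_Delta_sh r m powr (1 + \<delta>) = C * (1 / cf_Delta_sh r m) powr (- (1 + \<delta>))"
      using Dpos by (simp add: powr_divide powr_minus_divide[symmetric] powr_minus add.commute)
    also have "\<dots> \<le> C * of_int ?q powr (- (1 + \<delta>))"
      using qle q1 assms(4) C(1) by (intro mult_left_mono powr_mono2') auto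
    also have "\<dots> = of_int ?q * (C * of_int ?q powr (-2 - \<delta>))" using pw by (simp add: algebra_simps)
    also have "\<dots> \<le> of_int ?q * \<bar>r - of_int ?p / of_int ?q\<bar>"
      using C(2)[OF qpos] q1 by (intro mult_left_mono) auto
    finally show ?thesis using eq by simp
  qed
  with C show ?thesis by blast
qed




lemma decay_geo:
  fixes D :: "nat \<Rightarrow> real"
  assumes pos: "\<And>m. D m > 0" and dec: "\<And>m. D (Suc m) \<le> D m"
    and half: "\<And>m. D (Suc (Suc m)) \<le> D m / 2"
  shows "D (j + k) \<le> sqrt 2 * (1 / sqrt 2) ^ k * D j"
proof (induction k rule: less_induct)
  case (less k)
  show ?case
  proof (cases k)
    case 0 thus ?thesis using pos[of j] by simp
  next
    case (Suc k1)
    show ?thesis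
    proof (cases k1)
      case 0 thus ?thesis using Suc dec[of j] by simp
    next
      case (Suc k2)
      have "D (j + k) \<le> D (j + k2) / 2" using half[of "j+k2"] \<open>k = Suc k1\<close> Suc by simp
      also have "\<dots> \<le> sqrt 2 * (1 / sqrt 2) ^ k2 * D j / 2"
        using less[of k2] \<open>k = Suc k1\<close> Suc by simp
      also have "\<dots> = sqrt 2 * (1 / sqrt 2) ^ k * D j"
        using \<open>k = Suc k1\<close> Suc by (simp add: power2_eq_square[symmetric])
      finally show ?thesis .
    qed
  qed
qed

lemma pow_powr_aux: "(x::real) \<ge> 0 \<Longrightarrow> (x ^ k) powr b = (x powr b) ^ k"
  by (induction k) (auto simp: powr_mult)

lemma powr_split_aux:
  fixes x y a :: real assumes "x > 0" "y > 0"
  shows "x / y * y powr a = x powr a * (x / y) powr (1 - a)"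
proof -
  have "x powr a * (x / y) powr (1 - a) = x powr a * (x powr (1 - a) / y powr (1 - a))"
    by (simp add: powr_divide assms less_imp_le)
  also have "\<dots> = (x powr a * x powr (1 - a)) / (y powr 1 / y powr a)"
    by (simp add: powr_diff)
  also have "x powr a * x powr (1 - a) = x" using assms by (simp add: powr_add[symmetric])
  finally show ?thesis using assms by (simp add: field_simps)
qed

lemma E_bound_abstract:
  fixes D :: "nat \<Rightarrow> real" and c \<delta> \<sigma> :: real
  assumes pos: "\<And>m. D m > 0" and dec: "\<And>m. D (Suc m) \<le> D m"
    and half: "\<And>m. D (Suc (Suc m)) \<le> D m / 2"
    and dio: "\<And>m. D (Suc m) \<ge> c * D m powr (1 + \<delta>)" and c: "c > 0"
    and \<delta>: "\<delta> \<ge> 0" and \<sigma>: "0 \<le> \<sigma>" "\<sigma> < 1 + \<delta>"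
  shows "\<exists>C1. \<forall>n. (\<Sum>k=0..n. D (Suc n) / D (Suc (n - k)) * D (n - k) powr \<sigma>)
             \<le> C1 * D (Suc n) powr (\<sigma> / (1 + \<delta>))"
proof -
  define a where "a = \<sigma> / (1 + \<delta>)"
  have a0: "0 \<le> a" and a1: "a < 1" using \<sigma> \<delta> by (auto simp: a_def field_simps)
  have sig: "\<sigma> = (1 + \<delta>) * a" using \<delta> by (simp add: a_def)
  define \<phi> where "\<phi> = (1 / sqrt 2) powr (1 - a)"
  have \<phi>0: "0 < \<phi>" and \<phi>1: "\<phi> < 1"
  proof -
    show "0 < \<phi>" by (simp add: \<phi>_def)
    have "(1 / sqrt 2) powr (1 - a) < 1 powr (1 - a)"
      using a1 by (intro powr_less_mono2) auto
    then show "\<phi> < 1" by (simp add: \<phi>_def)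
  qed
  define K where "K = c powr (- a) * sqrt 2 powr (1 - a) / (1 - \<phi>)"
  have tm: "D (Suc n) / D (Suc (n - k)) * D (n - k) powr \<sigma>
      \<le> c powr (- a) * sqrt 2 powr (1 - a) * D (Suc n) powr a * \<phi> ^ k" if "k \<le> n" for n k
  proof -
    let ?x = "D (Suc n)" and ?y = "D (Suc (n - k))"
    have "D (n - k) powr \<sigma> = (D (n - k) powr (1 + \<delta>)) powr a"
      by (simp add: powr_powr sig)
    also have "\<dots> \<le> (?y / c) powr a"
      using dio[of "n-k"] c a0 by (intro powr_mono2) (auto simp: field_simps)
    also have "\<dots> = c powr (- a) * ?y powr a"
      using c pos by (simp add: powr_divide powr_minus divide_inverse mult.commute less_imp_le powr_mult inverse_powr)
    finally have 1: "D (n - k) powr \<sigma> \<le> c powr (- a) * ?y powr a" .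
    have 2: "?x / ?y * ?y powr a = ?x powr a * (?x / ?y) powr (1 - a)"
      using pos by (intro powr_split_aux)
    have "?x \<le> sqrt 2 * (1 / sqrt 2) ^ k * ?y"
      using decay_geo[of D, OF pos dec half, of "Suc (n - k)" k] that by simp
    then have "?x / ?y \<le> sqrt 2 * (1 / sqrt 2) ^ k" using pos by (simp add: field_simps)
    then have "(?x / ?y) powr (1 - a) \<le> (sqrt 2 * (1 / sqrt 2) ^ k) powr (1 - a)"
      using pos a1 by (intro powr_mono2) (auto intro: less_imp_le)
    also have "\<dots> = sqrt 2 powr (1 - a) * \<phi> ^ k"
      by (simp add: powr_mult \<phi>_def pow_powr_aux)
    finally have 3: "(?x / ?y) powr (1 - a) \<le> sqrt 2 powr (1 - a) * \<phi> ^ k" .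
    have "?x / ?y * D (n - k) powr \<sigma> \<le> ?x / ?y * (c powr (- a) * ?y powr a)"
      using 1 pos by (intro mult_left_mono) (auto intro: less_imp_le)
    also have "\<dots> = c powr (- a) * (?x powr a * (?x / ?y) powr (1 - a))"
      using 2 by (simp add: algebra_simps)
    also have "\<dots> \<le> c powr (- a) * (?x powr a * (sqrt 2 powr (1 - a) * \<phi> ^ k))"
      using 3 by (intro mult_left_mono) auto
    finally show ?thesis by (simp add: algebra_simps)
  qed
  have "(\<Sum>k=0..n. D (Suc n) / D (Suc (n - k)) * D (n - k) powr \<sigma>) \<le> K * D (Suc n) powr a" for n
  proof -
    have "(\<Sum>k=0..n. D (Suc n) / D (Suc (n - k)) * D (n - k) powr \<sigma>)
        \<le> (\<Sum>k=0..n. c powr (- a) * sqrt 2 powr (1 - a) * D (Suc n) powr a * \<phi> ^ k)"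
      by (intro sum_mono tm) auto
    also have "\<dots> = c powr (- a) * sqrt 2 powr (1 - a) * D (Suc n) powr a * (\<Sum>k=0..n. \<phi> ^ k)"
      by (simp add: sum_distrib_left)
    also have "\<dots> \<le> c powr (- a) * sqrt 2 powr (1 - a) * D (Suc n) powr a * (1 / (1 - \<phi>))"
      using geometric_sum_less[OF \<phi>0 \<phi>1, of "{0..n}"] by (intro mult_left_mono) auto
    also have "\<dots> = K * D (Suc n) powr a" by (simp add: K_def)
    finally show ?thesis .
  qed
  then show ?thesis unfolding a_def by blast
qed




lemma split_floor:
  fixes t d :: real assumes "0 \<le> t" "0 < d"
  shows "\<exists>b::nat. real b \<le> t / d \<and> 0 \<le> t - real b * d \<and> t - real b * d < d"
proof -
  define b where "b = nat \<lfloor>t / d\<rfloor>"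
  have tb: "real b = of_int \<lfloor>t / d\<rfloor>" using assms by (simp add: b_def)
  have 1: "real b \<le> t / d" using tb by linarith
  have 2: "t / d < real b + 1" using tb by linarith
  from 1 have "real b * d \<le> t" using assms by (simp add: field_simps)
  moreover from 2 have "t < (real b + 1) * d" using assms by (simp add: field_simps)
  ultimately show ?thesis using 1 by (intro exI[of _ b]) (auto simp: algebra_simps)
qed

locale holder_setup =
  fixes D :: "nat \<Rightarrow> real" and c \<delta> \<sigma> K Mg :: real and g :: "real \<Rightarrow> real"
  assumes pos: "\<And>m. D m > 0" and dec: "\<And>m. D (Suc m) \<le> D m"
    and half: "\<And>m. D (Suc (Suc m)) \<le> D m / 2"
    and dio: "\<And>m. D (Suc m) \<ge> c * D m powr (1 + \<delta>)" and c: "c > 0"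
    and \<delta>: "\<delta> \<ge> 0" and \<sigma>: "\<delta> < \<sigma>" "\<sigma> < 1 + \<delta>"
    and K: "K \<ge> 0"
    and gcont: "\<And>x. isCont g x" and gbd: "\<And>x. \<bar>g x\<bar> \<le> Mg"
    and shift: "\<And>i v. i \<ge> 1 \<Longrightarrow> \<bar>g (v + D i) - g v\<bar> \<le> K * D i powr (\<sigma> / (1 + \<delta>))"
begin

definition "a = \<sigma> / (1 + \<delta>)"
definition "\<beta> = \<sigma> - \<delta>"
definition "K1 = K * c powr (a - 1)"

lemma a_props: "0 \<le> a" "a < 1" "(1 + \<delta>) * a = \<sigma>"
  using \<sigma> \<delta> by (auto simp: a_def field_simps)

lemma beta_pos: "\<beta> > 0" using \<sigma> by (simp add: \<beta>_def)

lemma iter: "i \<ge> 1 \<Longrightarrow> \<bar>g (v + real b * D i) - g v\<bar> \<le> real b * (K * D i powr a)"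
proof (induction b)
  case 0 thus ?case by simp
next
  case (Suc b)
  have "\<bar>g (v + real (Suc b) * D i) - g v\<bar>
     \<le> \<bar>g ((v + real b * D i) + D i) - g (v + real b * D i)\<bar> + \<bar>g (v + real b * D i) - g v\<bar>"
    by (simp add: algebra_simps)
  also have "\<dots> \<le> K * D i powr a + real b * (K * D i powr a)"
    using shift[OF Suc.prems, of "v + real b * D i"] Suc by (simp add: a_def)
  finally show ?case by (simp add: algebra_simps)
qed

lemma cost:
  assumes t: "0 < t" "t \<le> D j" and b: "real b \<le> t / D (Suc j)"
  shows "real b * (K * D (Suc j) powr a) \<le> K1 * t powr \<beta>"
proof -
  have Dp: "D (Suc j) > 0" by (rule pos)
  have e: "a - 1 \<le> 0" using a_props by simp
  have "real b * D (Suc j) powr a \<le> t / D (Suc j) * D (Suc j) powr a"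
    using b by (intro mult_right_mono) auto
  also have "\<dots> = t * D (Suc j) powr (a - 1)" using Dp by (simp add: powr_diff)
  also have "\<dots> \<le> t * (c * t powr (1 + \<delta>)) powr (a - 1)"
  proof -
    have "c * t powr (1 + \<delta>) \<le> c * D j powr (1 + \<delta>)"
      using t c \<delta> by (intro mult_left_mono powr_mono2) auto
    also have "\<dots> \<le> D (Suc j)" by (rule dio)
    finally have "c * t powr (1 + \<delta>) \<le> D (Suc j)" .
    then have "D (Suc j) powr (a - 1) \<le> (c * t powr (1 + \<delta>)) powr (a - 1)"
      using e c t by (intro powr_mono2') auto
    then show ?thesis using t by (intro mult_left_mono) auto
  qed
  also have "\<dots> = c powr (a - 1) * (t powr 1 * t powr ((1 + \<delta>) * (a - 1)))"
    using c t by (simp add: powr_mult powr_powr)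
  also have "t powr 1 * t powr ((1 + \<delta>) * (a - 1)) = t powr \<beta>"
  proof -
    have "t powr 1 * t powr ((1 + \<delta>) * (a - 1)) = t powr (1 + (1 + \<delta>) * (a - 1))"
      by (rule powr_add[symmetric])
    also have "1 + (1 + \<delta>) * (a - 1) = \<beta>" using a_props(3) by (simp add: \<beta>_def algebra_simps)
    finally show ?thesis .
  qed
  finally have "real b * D (Suc j) powr a \<le> c powr (a - 1) * t powr \<beta>" .
  then have "K * (real b * D (Suc j) powr a) \<le> K * (c powr (a - 1) * t powr \<beta>)"
    using K by (rule mult_left_mono)
  then show ?thesis by (simp add: K1_def algebra_simps)
qed

lemma K1_nonneg: "K1 \<ge> 0" using K by (simp add: K1_def)

definition "C2 = 2 * K1 / (1 - 2 powr (- \<beta>))"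

lemma C2_props: "C2 \<ge> 0" "2 * K1 + C2 * 2 powr (- \<beta>) = C2"
proof -
  have q: "2 powr (- \<beta>) < 1" using beta_pos by (intro powr_less_one) auto
  then show "C2 \<ge> 0" using K1_nonneg by (auto simp: C2_def)
  have "C2 * (1 - 2 powr (- \<beta>)) = 2 * K1" using q beta_pos by (simp add: C2_def)
  then show "2 * K1 + C2 * 2 powr (- \<beta>) = C2" by (simp add: algebra_simps)
qed

lemma descent:
  "\<forall>t. 0 \<le> t \<and> t < D j \<longrightarrow> (\<exists>r. 0 \<le> r \<and> r \<le> D N \<and> \<bar>g (u + t) - g (u + r)\<bar> \<le> C2 * D j powr \<beta>)"
proof (induction j rule: measure_induct_rule[of "\<lambda>j. N - j"])
  case (less j)
  show ?case
  proof (intro allI impI)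
    fix t assume t: "0 \<le> t \<and> t < D j"
    show "\<exists>r. 0 \<le> r \<and> r \<le> D N \<and> \<bar>g (u + t) - g (u + r)\<bar> \<le> C2 * D j powr \<beta>"
    proof (cases "N \<le> j")
      case True
      have "D j \<le> D N" using True by (induction rule: dec_induct) (auto intro: order_trans dec)
      then show ?thesis using t C2_props by (intro exI[of _ t]) auto
    next
      case False
      obtain b1 :: nat where b1: "real b1 \<le> t / D (Suc j)" "0 \<le> t - real b1 * D (Suc j)"
          "t - real b1 * D (Suc j) < D (Suc j)"
        using split_floor[of t "D (Suc j)"] t pos by auto
      define t1 where "t1 = t - real b1 * D (Suc j)"
      obtain b2 :: nat where b2: "real b2 \<le> t1 / D (Suc (Suc j))" "0 \<le> t1 - real b2 * D (Suc (Suc j))"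
          "t1 - real b2 * D (Suc (Suc j)) < D (Suc (Suc j))"
        using split_floor[of t1 "D (Suc (Suc j))"] b1 pos by (auto simp: t1_def)
      define t2 where "t2 = t1 - real b2 * D (Suc (Suc j))"
      have "N - Suc (Suc j) < N - j" using False by simp
      from less[OF this, rule_format, of t2] b2 obtain r where
        r: "0 \<le> r" "r \<le> D N" "\<bar>g (u + t2) - g (u + r)\<bar> \<le> C2 * D (Suc (Suc j)) powr \<beta>"
        by (auto simp: t2_def)
      have c1: "\<bar>g (u + t) - g (u + t1)\<bar> \<le> K1 * D j powr \<beta>"
      proof -
        have "\<bar>g (u + t) - g (u + t1)\<bar> = \<bar>g ((u + t1) + real b1 * D (Suc j)) - g (u + t1)\<bar>"
          by (simp add: t1_def)
        also have "\<dots> \<le> real b1 * (K * D (Suc j) powr a)" by (rule iter) simp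
        also have "\<dots> \<le> K1 * D j powr \<beta>"
        proof (rule cost)
          show "0 < D j" "D j \<le> D j" using pos by auto
          show "real b1 \<le> D j / D (Suc j)" using b1(1) t pos[of "Suc j"]
            by (meson divide_right_mono less_eq_real_def order_trans)
        qed
        finally show ?thesis .
      qed
      have c2: "\<bar>g (u + t1) - g (u + t2)\<bar> \<le> K1 * D j powr \<beta>"
      proof -
        have "\<bar>g (u + t1) - g (u + t2)\<bar> = \<bar>g ((u + t2) + real b2 * D (Suc (Suc j))) - g (u + t2)\<bar>"
          by (simp add: t2_def)
        also have "\<dots> \<le> real b2 * (K * D (Suc (Suc j)) powr a)" by (rule iter) simp
        also have "\<dots> \<le> K1 * D (Suc j) powr \<beta>"
        proof (rule cost)
          show "0 < D (Suc j)" "D (Suc j) \<le> D (Suc j)" using pos by auto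
          show "real b2 \<le> D (Suc j) / D (Suc (Suc j))" using b2(1) b1(3) pos[of "Suc (Suc j)"]
            unfolding t1_def by (meson divide_right_mono less_eq_real_def order_trans)
        qed
        also have "\<dots> \<le> K1 * D j powr \<beta>"
          using K1_nonneg beta_pos dec pos by (intro mult_left_mono powr_mono2) (auto intro: less_imp_le)
        finally show ?thesis .
      qed
      have c3: "C2 * D (Suc (Suc j)) powr \<beta> \<le> C2 * 2 powr (- \<beta>) * D j powr \<beta>"
      proof -
        have "D (Suc (Suc j)) powr \<beta> \<le> (D j / 2) powr \<beta>"
          using half pos beta_pos by (intro powr_mono2) (auto intro: less_imp_le)
        also have "\<dots> = 2 powr (- \<beta>) * D j powr \<beta>"
          using less_imp_le[OF pos[of j]] by (simp add: powr_divide powr_minus_divide)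
        finally show ?thesis using C2_props by (simp add: mult_left_mono mult.assoc)
      qed
      have "\<bar>g (u + t) - g (u + r)\<bar> \<le> \<bar>g (u + t) - g (u + t1)\<bar> + \<bar>g (u + t1) - g (u + t2)\<bar>
            + \<bar>g (u + t2) - g (u + r)\<bar>" by linarith
      also have "\<dots> \<le> (2 * K1 + C2 * 2 powr (- \<beta>)) * D j powr \<beta>"
        using c1 c2 c3 r(3) by (simp add: algebra_simps)
      also have "\<dots> = C2 * D j powr \<beta>" using C2_props by simp
      finally show ?thesis using r by blast
    qed
  qed
qed

lemma D_small: "0 < \<eta> \<Longrightarrow> \<exists>N. D N < \<eta>"
proof -
  assume e: "0 < \<eta>"
  have "1 / sqrt 2 < (1::real)" by simp
  obtain N where N: "(1 / sqrt 2) ^ N < \<eta> / (sqrt 2 * D 0)"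
    using real_arch_pow_inv[of "\<eta> / (sqrt 2 * D 0)" "1 / sqrt 2"] e pos[of 0] by auto
  have "D N \<le> sqrt 2 * (1 / sqrt 2) ^ N * D 0"
    using decay_geo[of D, OF pos dec half, of 0 N] by simp
  also have "\<dots> < sqrt 2 * (\<eta> / (sqrt 2 * D 0)) * D 0"
    using N pos[of 0] by (intro mult_strict_right_mono mult_strict_left_mono) auto
  also have "\<dots> = \<eta>" using pos[of 0] by simp
  finally show ?thesis by blast
qed

lemma local_bound:
  assumes "0 \<le> t" "t < D j"
  shows "\<bar>g (u + t) - g u\<bar> \<le> C2 * D j powr \<beta>"
proof (rule field_le_epsilon)
  fix e :: real assume e: "0 < e"
  obtain \<eta> where \<eta>: "\<eta> > 0" "\<And>s. \<bar>s\<bar> < \<eta> \<Longrightarrow> \<bar>g (u + s) - g u\<bar> < e"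
  proof -
    have i1: "isCont (\<lambda>s. u + s) (0::real)" by simp
    have i2: "isCont g ((\<lambda>s. u + s) 0)" by (simp add: gcont)
    have "isCont (\<lambda>s. g (u + s)) 0" using isCont_o2[OF i1 i2] by simp
    then have "(\<lambda>s. g (u + s)) \<midarrow>0\<rightarrow> g (u + 0)" unfolding isCont_def .
    from LIM_D[OF this e] obtain \<eta> where \<eta>: "\<eta> > 0"
      "\<And>s. s \<noteq> 0 \<and> norm (s - 0) < \<eta> \<Longrightarrow> norm (g (u + s) - g (u + 0)) < e" by blast
    show ?thesis
    proof (rule that[OF \<eta>(1)])
      fix s :: real assume s: "\<bar>s\<bar> < \<eta>"
      show "\<bar>g (u + s) - g u\<bar> < e"
      proof (cases "s = 0")
        case True thus ?thesis using e by simp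
      next
        case False thus ?thesis using \<eta>(2)[of s] s by simp
      qed
    qed
  qed
  obtain N where N: "D N < \<eta>" using D_small[OF \<eta>(1)] by blast
  obtain r where r: "0 \<le> r" "r \<le> D N" "\<bar>g (u + t) - g (u + r)\<bar> \<le> C2 * D j powr \<beta>"
    using descent[of j N u] assms by blast
  have "\<bar>g (u + r) - g u\<bar> < e" using r N by (intro \<eta>(2)) auto
  then show "\<bar>g (u + t) - g u\<bar> \<le> C2 * D j powr \<beta> + e" using r(3) by linarith
qed

definition "A = max (K1 + C2) (2 * Mg / D 1 powr \<beta>)"

lemma fwd: assumes "0 \<le> t" shows "\<bar>g (u + t) - g u\<bar> \<le> A * t powr \<beta>"
proof -
  have Mg: "Mg \<ge> 0" using gbd[of 0] by simp
  consider "t = 0" | "D 1 \<le> t" | "0 < t" "t < D 1" using assms by linarith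
  then show ?thesis
  proof cases
    case 1 thus ?thesis by simp
  next
    case 2
    have "\<bar>g (u + t) - g u\<bar> \<le> 2 * Mg" using gbd[of "u+t"] gbd[of u] by linarith
    also have "\<dots> = (2 * Mg / D 1 powr \<beta>) * D 1 powr \<beta>" using pos[of 1] by simp
    also have "\<dots> \<le> (2 * Mg / D 1 powr \<beta>) * t powr \<beta>"
      using 2 Mg beta_pos pos[of 1] by (intro mult_left_mono powr_mono2) auto
    also have "\<dots> \<le> A * t powr \<beta>" by (intro mult_right_mono) (auto simp: A_def)
    finally show ?thesis .
  next
    case 3
    obtain N where N: "D N < t" using D_small[OF 3(1)] by blast
    have ex: "\<exists>j. D (Suc j) \<le> t" using N dec[of N] by (intro exI[of _ N]) auto
    define j where "j = (LEAST j. D (Suc j) \<le> t)"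
    have j1: "D (Suc j) \<le> t" unfolding j_def by (rule LeastI_ex[OF ex])
    have jnz: "j \<noteq> 0"
    proof
      assume "j = 0" with j1 3 show False by simp
    qed
    have j2: "t < D j"
    proof -
      have "\<not> D (Suc (j - 1)) \<le> t" unfolding j_def by (rule not_less_Least) (use jnz j_def in auto)
      then show ?thesis using jnz by simp
    qed
    obtain b :: nat where b: "real b \<le> t / D (Suc j)" "0 \<le> t - real b * D (Suc j)"
          "t - real b * D (Suc j) < D (Suc j)"
      using split_floor[of t "D (Suc j)"] 3 pos by auto
    define t1 where "t1 = t - real b * D (Suc j)"
    have "\<bar>g (u + t) - g (u + t1)\<bar> = \<bar>g ((u + t1) + real b * D (Suc j)) - g (u + t1)\<bar>"
      by (simp add: t1_def)
    also have "\<dots> \<le> real b * (K * D (Suc j) powr a)" by (rule iter) simp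
    also have "\<dots> \<le> K1 * t powr \<beta>" using 3 j2 b by (intro cost) auto
    finally have p1: "\<bar>g (u + t) - g (u + t1)\<bar> \<le> K1 * t powr \<beta>" .
    have "\<bar>g (u + t1) - g u\<bar> \<le> C2 * D (Suc j) powr \<beta>"
      using b by (intro local_bound) (auto simp: t1_def)
    also have "\<dots> \<le> C2 * t powr \<beta>"
      using C2_props j1 beta_pos pos by (intro mult_left_mono powr_mono2) (auto intro: less_imp_le)
    finally have "\<bar>g (u + t) - g u\<bar> \<le> (K1 + C2) * t powr \<beta>" using p1 by (simp add: algebra_simps)
    also have "\<dots> \<le> A * t powr \<beta>" by (intro mult_right_mono) (auto simp: A_def)
    finally show ?thesis .
  qed
qed

lemma holder: "\<bar>g v - g w\<bar> \<le> A * \<bar>v - w\<bar> powr \<beta>"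
proof (cases "w \<le> v")
  case True thus ?thesis using fwd[of "v - w" w] by simp
next
  case False thus ?thesis using fwd[of "w - v" v] by (simp add: abs_minus_commute)
qed

end




lemma lift_nat: fixes F :: "real \<Rightarrow> real" assumes "\<And>x. F (x + 1) = F x + (1::real)" shows "F (x + real n) = F x + real n"
proof (induction n)
  case (Suc n)
  have "F (x + real (Suc n)) = F ((x + real n) + 1)" by (simp add: algebra_simps)
  then show ?case using Suc assms by simp
qed simp

lemma lift_int: fixes F :: "real \<Rightarrow> real" assumes "\<And>x. F (x + 1) = F x + (1::real)" shows "F (x + of_int k) = F x + of_int k"
proof (cases "k \<ge> 0")
  case True
  then have e: "of_int k = real (nat k)" by simp
  show ?thesis unfolding e by (rule lift_nat[of F, OF assms])
next
  case False
  then have k: "of_int k = - real (nat (- k))" by simp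
  have "F ((x - real (nat (-k))) + real (nat (-k))) = F (x - real (nat (-k))) + real (nat (-k))"
    by (rule lift_nat[of F, OF assms])
  then show ?thesis unfolding k by (simp add: algebra_simps)
qed

lemma per_int: fixes h :: "real \<Rightarrow> real" assumes "\<And>x. h (x + 1) = (h x :: real)" shows "h (x + of_int k) = h x"
proof -
  have "(\<lambda>x. h x + x) (x + of_int k) = (\<lambda>x. h x + x) x + of_int k"
    by (rule lift_int) (simp add: assms)
  then show ?thesis by simp
qed

lemma per_bounded:
  fixes h :: "real \<Rightarrow> real" assumes per: "\<And>x. h (x + 1) = h x" and cont: "continuous_on UNIV h"
  shows "\<exists>B. \<forall>x. \<bar>h x\<bar> \<le> B"
proof -
  have "compact (h ` {0..1})"
    by (intro compact_continuous_image continuous_on_subset[OF cont]) auto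
  then obtain B where B: "\<And>y. y \<in> h ` {0..1} \<Longrightarrow> norm y \<le> B"
  proof -
    assume *: "\<And>B. (\<And>y. y \<in> h ` {0..1} \<Longrightarrow> norm y \<le> B) \<Longrightarrow> thesis"
    from compact_imp_bounded[OF \<open>compact (h ` {0..1})\<close>] show thesis
      unfolding bounded_iff using * by blast
  qed
  have "\<bar>h x\<bar> \<le> B" for x
  proof -
    have "h x = h (frac x + of_int \<lfloor>x\<rfloor>)" by (simp add: frac_def)
    also have "\<dots> = h (frac x)" by (rule per_int[of h, OF per])
    finally have "h x = h (frac x)" .
    moreover have "frac x \<in> {0..1}" using frac_lt_1[of x] frac_ge_0[of x] by auto
    ultimately show ?thesis using B by auto
  qed
  then show ?thesis by blast
qed

lemma lift_surj:
  fixes F :: "real \<Rightarrow> real" assumes lift: "\<And>x. F (x + 1) = F x + 1" and cont: "continuous_on UNIV F"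
  shows "\<exists>x. F x = y"
proof -
  define n where "n = \<lfloor>y - F 0\<rfloor>"
  have a: "F (of_int n) = F 0 + of_int n" using lift_int[of F, OF lift, of 0 n] by simp
  have b: "F (of_int n + 1) = F 0 + of_int n + 1" using a lift by simp
  have "F (of_int n) \<le> y" "y \<le> F (of_int n + 1)" using a b unfolding n_def by linarith+
  moreover have "continuous_on {of_int n..of_int n + 1} F"
    using continuous_on_subset[OF cont] by blast
  ultimately show ?thesis using IVT'[of F "of_int n" y "of_int n + 1"] by auto
qed

lemma pos_deriv_strict_mono:
  fixes F :: "real \<Rightarrow> real" assumes "\<And>x. (F has_real_derivative F' x) (at x)" "\<And>x. F' x > (0::real)"
  shows "strict_mono F"
proof (rule strict_monoI)
  fix x y :: real assume "x < y"
  show "F x < F y"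
  proof (rule DERIV_pos_imp_increasing[OF \<open>x < y\<close>])
    fix z show "\<exists>y. DERIV F z :> y \<and> y > 0" using assms by blast
  qed
qed




locale dyn =
  fixes F F' h :: "real \<Rightarrow> real"
  assumes lift: "\<And>x. F (x + 1) = F x + 1"
    and deriv_F: "\<And>x. (F has_real_derivative F' x) (at x)"
    and pos_F': "\<And>x. F' x > 0"
    and h_per: "\<And>x. h (x + 1) = h x"
    and h_cont: "continuous_on UNIV h"
    and h_pos: "\<And>x. h x > 0"
    and h_prob: "integral {0..1} h = 1"
    and h_inv: "\<And>A. A \<in> sets borel \<Longrightarrow>
                 emeasure (density lborel h) (F -` A) = emeasure (density lborel h) A"
begin

lemma F_cont: "continuous_on UNIV F"
  by (rule continuous_at_imp_continuous_on) (use DERIV_isCont[OF deriv_F] in blast)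

lemma F_smono: "strict_mono F" by (rule pos_deriv_strict_mono[OF deriv_F pos_F'])

lemma F_surj: "surj F"
proof -
  have "\<exists>x. F x = y" for y by (rule lift_surj[OF lift F_cont])
  then show ?thesis unfolding surj_def by (metis)
qed

lemma F_inj: "inj F" by (rule strict_mono_imp_inj_on[OF F_smono])

definition "G = inv F"
lemma FG: "F (G y) = y" unfolding G_def by (rule surj_f_inv_f[OF F_surj])
lemma GF: "G (F x) = x" using inv_f_f[of F x] F_inj unfolding G_def by blast

definition H :: "real \<Rightarrow> real" where "H u = (LBINT y=(0::real)..u. h y)"

lemma H_deriv: "(H has_real_derivative h x) (at x)"
proof -
  define a where "a = min x 0 - 1"
  define b where "b = max x 0 + 1"
  have "((\<lambda>u. LBINT y=(0::real)..u. h y) has_vector_derivative h x) (at x within {a..b})"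
  proof (rule interval_integral_FTC2)
    show "continuous_on {a..b} h" using continuous_on_subset[OF h_cont] by blast
  qed (auto simp: a_def b_def)
  moreover have "x \<in> interior {a..b}" unfolding interior_atLeastAtMost_real by (auto simp: a_def b_def)
  then have W: "at x within {a..b} = at x" by (rule at_within_interior)
  ultimately have "((\<lambda>u. LBINT y=(0::real)..u. h y) has_vector_derivative h x) (at x)"
    by (simp only: W)
  then show ?thesis unfolding H_def[abs_def] has_real_derivative_iff_has_vector_derivative .
qed

lemma H_cont: "continuous_on UNIV H"
  by (rule continuous_at_imp_continuous_on) (use DERIV_isCont[OF H_deriv] in blast)

lemma H_int: assumes "a \<le> b" shows "(h has_integral (H b - H a)) {a..b}"
proof (rule fundamental_theorem_of_calculus[OF assms])
  fix x
  have "(H has_vector_derivative h x) (at x)"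
    using H_deriv[of x] by (simp only: has_real_derivative_iff_has_vector_derivative)
  then show "(H has_vector_derivative h x) (at x within {a..b})"
    by (rule has_vector_derivative_at_within)
qed

lemma H_per: "H (x + 1) = H x + 1"
proof -
  have "\<forall>y. ((\<lambda>x. H (x + 1) - H x) has_real_derivative 0) (at y)"
  proof
    fix y
    have d0: "((\<lambda>x. x + 1) has_real_derivative 1) (at y)"
      using DERIV_add[OF DERIV_ident DERIV_const[of 1]] by simp
    have "((\<lambda>x. H (x + 1) - H x) has_real_derivative h (y + 1) * 1 - h y) (at y)"
      by (rule DERIV_diff[OF DERIV_chain2[OF H_deriv d0] H_deriv])
    then show "((\<lambda>x. H (x + 1) - H x) has_real_derivative 0) (at y)" by (simp add: h_per)
  qed
  from DERIV_isconst_all[OF this, of x 0]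
  have "H (x + 1) - H x = H 1 - H 0" by simp
  moreover have "H 1 - H 0 = 1" using integral_unique[OF H_int[of 0 1]] h_prob by simp
  ultimately show ?thesis by simp
qed

lemma H_smono: "strict_mono H" by (rule pos_deriv_strict_mono[OF H_deriv h_pos])

lemma H_surj: "surj H"
proof -
  have "\<exists>x. H x = y" for y by (rule lift_surj[OF H_per H_cont])
  then show ?thesis unfolding surj_def by (metis)
qed

lemma H_inj: "inj H" by (rule strict_mono_imp_inj_on[OF H_smono])

lemma h_meas: "(\<lambda>x. ennreal (h x)) \<in> borel_measurable lborel"
proof -
  have "h \<in> borel_measurable borel" by (rule borel_measurable_continuous_onI[OF h_cont])
  then show ?thesis by simp
qed

lemma meas_interval: assumes "a \<le> b"
  shows "emeasure (density lborel h) {a..b} = ennreal (H b - H a)"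
proof -
  have "emeasure (density lborel h) {a..b} = (\<integral>\<^sup>+ x. ennreal (h x) * indicator {a..b} x \<partial>lborel)"
    by (rule emeasure_density[OF h_meas]) simp
  also have "\<dots> = ennreal (H b - H a)"
    using h_pos by (intro nn_integral_has_integral_lebesgue' H_int assms less_imp_le)
  finally show ?thesis .
qed

lemma H_mono_le: "a \<le> b \<Longrightarrow> H a \<le> H b"
  using H_smono by (metis eq_iff less_imp_le order.order_iff_strict strict_mono_less)

lemma preimage: "F -` {a..b} = {G a..G b}"
proof -
  have "a \<le> F x \<longleftrightarrow> G a \<le> x" for a x using F_smono FG[of a]
    by (metis strict_mono_less_eq)
  moreover have "F x \<le> b \<longleftrightarrow> x \<le> G b" for x using F_smono FG[of b]
    by (metis strict_mono_less_eq)
  ultimately show ?thesis by auto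
qed

lemma G_mono_le: "a \<le> b \<Longrightarrow> G a \<le> G b"
  using F_smono FG by (metis strict_mono_less_eq)

lemma HG_diff: assumes "a \<le> b" shows "H (G b) - H (G a) = H b - H a"
proof -
  have "ennreal (H (G b) - H (G a)) = ennreal (H b - H a)"
    using h_inv[of "{a..b}"] preimage meas_interval[OF assms] meas_interval[OF G_mono_le[OF assms]]
    by simp
  then show ?thesis using H_mono_le assms G_mono_le by (simp add: ennreal_inj)
qed

definition "\<kappa> = H 0 - H (G 0)"

lemma H_shift: "H (F x) = H x + \<kappa>"
proof -
  have "H (G y) = H y - \<kappa>" for y
  proof (cases "0 \<le> y")
    case True thus ?thesis using HG_diff[OF True] by (simp add: \<kappa>_def)
  next
    case False thus ?thesis using HG_diff[of y 0] by (simp add: \<kappa>_def)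
  qed
  from this[of "F x"] show ?thesis by (simp add: GF)
qed

lemma H_iter: "H ((F ^^ n) x) = H x + real n * \<kappa>"
  by (induction n) (simp_all add: H_shift algebra_simps)

lemma hF: "F' x = h x / h (F x)"
proof -
  have 1: "((\<lambda>x. H (F x)) has_real_derivative h (F x) * F' x) (at x)"
    by (rule DERIV_chain2[OF H_deriv deriv_F])
  have 2: "((\<lambda>x. H (F x)) has_real_derivative h x) (at x)"
    unfolding H_shift using DERIV_add[OF H_deriv DERIV_const[of \<kappa>]] by simp
  have "h (F x) * F' x = h x" using DERIV_unique[OF 1 2] .
  then show ?thesis using h_pos[of "F x"] by (simp add: field_simps)
qed

lemma Fn_deriv: "((F ^^ n) has_real_derivative h x / h ((F ^^ n) x)) (at x)"
proof (induction n)
  case 0 show ?case using h_pos[of x] by (simp add: DERIV_ident)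
next
  case (Suc n)
  have "((\<lambda>x. F ((F ^^ n) x)) has_real_derivative F' ((F ^^ n) x) * (h x / h ((F ^^ n) x))) (at x)"
    by (rule DERIV_chain2[OF deriv_F Suc])
  moreover have "F' ((F ^^ n) x) * (h x / h ((F ^^ n) x)) = h x / h ((F ^^ Suc n) x)"
    using h_pos[of "(F ^^ n) x"] by (simp add: hF)
  ultimately show ?case by (simp add: o_def)
qed

lemma deriv_Fn: "deriv (F ^^ n) x = h x / h ((F ^^ n) x)"
  by (rule DERIV_imp_deriv[OF Fn_deriv])

lemma rot_lim: "(\<lambda>n. (F ^^ n) 0 / real n) \<longlonglongrightarrow> \<kappa>"
proof -
  have "continuous_on UNIV (\<lambda>y. H y - y)" by (intro continuous_intros H_cont)
  then obtain B where B: "\<And>y. \<bar>H y - y\<bar> \<le> B"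
    using per_bounded[of "\<lambda>y. H y - y"] H_per by (auto simp: algebra_simps)
  have bd: "\<bar>(F ^^ n) 0 - real n * \<kappa>\<bar> \<le> B + \<bar>H 0\<bar>" for n
    using B[of "(F ^^ n) 0"] H_iter[of n 0] by linarith
  have "(\<lambda>n. (F ^^ n) 0 / real n - \<kappa>) \<longlonglongrightarrow> 0"
  proof (rule Lim_null_comparison)
    show "\<forall>\<^sub>F n in sequentially. norm ((F ^^ n) 0 / real n - \<kappa>) \<le> (B + \<bar>H 0\<bar>) / real n"
      using eventually_ge_at_top[of "1::nat"]
    proof eventually_elim
      case (elim n)
      then have "(F ^^ n) 0 / real n - \<kappa> = ((F ^^ n) 0 - real n * \<kappa>) / real n"
        by (simp add: field_simps)
      then show ?case using bd[of n] elim by (simp add: divide_right_mono)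
    qed
    show "(\<lambda>n. (B + \<bar>H 0\<bar>) / real n) \<longlonglongrightarrow> 0" by (rule lim_const_over_n)
  qed
  then show ?thesis by (simp add: LIM_zero_iff)
qed

lemma rot_eq: "rotation_number F = frac \<kappa>"
  unfolding rotation_number_def using limI[OF rot_lim] by simp

end



context dyn begin

lemma h_bound: "\<exists>M. \<forall>x. h x \<le> M"
proof -
  obtain B where "\<And>x. \<bar>h x\<bar> \<le> B" using per_bounded[of h, OF h_per h_cont] by blast
  then show ?thesis by (meson abs_le_D1)
qed

lemma H_lip: assumes "\<And>x. h x \<le> M" shows "\<bar>H x - H y\<bar> \<le> M * \<bar>x - y\<bar>"
proof -
  have *: "H b - H a \<le> M * (b - a)" if ab: "a < b" for a b
  proof -
    obtain z where "H b - H a = (b - a) * h z"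
      using MVT2[OF ab, of H h] H_deriv by blast
    moreover have "(b - a) * h z \<le> (b - a) * M" using ab assms[of z] by (intro mult_left_mono) auto
    ultimately show ?thesis by (simp add: mult.commute)
  qed
  have m: "a \<le> b \<Longrightarrow> H a \<le> H b" for a b by (rule H_mono_le)
  consider "x < y" | "x = y" | "y < x" by linarith
  then show ?thesis
  proof cases
    case 1 thus ?thesis using *[OF 1] m[of x y] by simp
  next
    case 2 thus ?thesis by simp
  next
    case 3 thus ?thesis using *[OF 3] m[of y x] by simp
  qed
qed

definition "Hi = inv H"
lemma HHi: "H (Hi y) = y" unfolding Hi_def by (rule surj_f_inv_f[OF H_surj])
lemma HiH: "Hi (H x) = x" using inv_f_f[of H x] H_inj unfolding Hi_def by blast

definition "gg u = h (Hi u)"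

lemma gg_H: "gg (H x) = h x" by (simp add: gg_def HiH)

lemma gg_per: "gg (u + 1) = gg u"
proof -
  have "H (Hi u + 1) = u + 1" by (simp add: H_per HHi)
  then have "Hi (u + 1) = Hi u + 1" using HiH by metis
  then show ?thesis by (simp add: gg_def h_per)
qed

lemma gg_cont: "isCont gg u"
proof -
  have "isCont Hi (H (Hi u))"
  proof (rule isCont_inverse_function[where d=1 and f=H and g=Hi and x="Hi u"])
    show "\<And>z. \<bar>z - Hi u\<bar> \<le> 1 \<Longrightarrow> Hi (H z) = z" by (rule HiH)
    show "\<And>z. \<bar>z - Hi u\<bar> \<le> 1 \<Longrightarrow> isCont H z" by (rule DERIV_isCont[OF H_deriv])
  qed simp
  then have i1: "isCont Hi u" by (simp only: HHi)
  have i2: "isCont h (Hi u)" using h_cont by (simp add: continuous_on_eq_continuous_at)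
  show ?thesis unfolding gg_def[abs_def] using isCont_o2[OF i1 i2] .
qed

end




theorem proposition4:
  fixes F F' h :: "real \<Rightarrow> real" and \<delta> \<sigma> :: real
  assumes delta: "\<delta> \<ge> 0"
    and lift: "\<And>x. F (x + 1) = F x + 1"
    and deriv_F: "\<And>x. (F has_real_derivative F' x) (at x)"
    and cont_F': "continuous_on UNIV F'"
    and pos_F': "\<And>x. F' x > 0"
    and rot: "rotation_number F \<in> diophantine_class \<delta>"
    and h_per: "\<And>x. h (x + 1) = h x"
    and h_cont: "continuous_on UNIV h"
    and h_pos: "\<And>x. h x > 0"
    and h_prob: "integral {0..1} h = 1"
    and h_inv: "\<And>A. A \<in> sets borel \<Longrightarrow>
                 emeasure (density lborel h) (F -` A) = emeasure (density lborel h) A"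
    and sigma: "0 \<le> \<sigma>" "\<sigma> < 1 + \<delta>"
    and bound: "\<exists>C. \<forall>n \<xi>. \<bar>deriv (F ^^ nat (cf_q (rotation_number F) n)) \<xi> - 1\<bar>
                          \<le> C * cf_E (rotation_number F) n \<sigma>"
  shows "(\<exists>C'. \<forall>n \<xi>. \<bar>deriv (F ^^ nat (cf_q (rotation_number F) n)) \<xi> - 1\<bar>
                    \<le> C' * cf_Delta (rotation_number F) n powr (\<sigma> / (1 + \<delta>)))
         \<and> h \<in> holder_class (max 0 (\<sigma> - \<delta>))"
proof -
  interpret dyn F F' h
    using lift deriv_F pos_F' h_per h_cont h_pos h_prob h_inv by unfold_locales auto
  define \<rho> where "\<rho> = rotation_number F"
  have rho_eq: "\<rho> = frac \<kappa>" unfolding \<rho>_def by (rule rot_eq)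
  have irr: "\<rho> \<notin> \<rat>" using rot by (simp add: \<rho>_def diophantine_class_def)
  have r0: "0 < \<rho>"
  proof -
    have "\<rho> \<noteq> 0" using irr by auto
    then show ?thesis using frac_ge_0[of \<kappa>] rho_eq by linarith
  qed
  have r1: "\<rho> < 1" using frac_lt_1[of \<kappa>] rho_eq by simp
  define D where "D = cf_Delta_sh \<rho>"
  have posD: "\<And>m. D m > 0" unfolding D_def by (rule cf_D_pos[OF irr r0 r1])
  have decD: "\<And>m. D (Suc m) \<le> D m" unfolding D_def by (rule cf_D_dec[OF irr r0 r1])
  have halfD: "\<And>m. D (Suc (Suc m)) \<le> D m / 2" unfolding D_def by (rule cf_D_half[OF irr r0 r1])
  obtain c where c: "c > 0" "\<And>m. D (Suc m) \<ge> c * D m powr (1 + \<delta>)"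
    using cf_dioph[OF rot[folded \<rho>_def] r0 r1 delta] unfolding D_def by blast
  obtain C1 where C1: "\<And>n. (\<Sum>k=0..n. D (Suc n) / D (Suc (n - k)) * D (n - k) powr \<sigma>)
             \<le> C1 * D (Suc n) powr (\<sigma> / (1 + \<delta>))"
    using E_bound_abstract[of D, OF posD decD halfD c(2) c(1) delta sigma] by blast
  define C1' where "C1' = max C1 0"
  have E_eq: "cf_E \<rho> n \<sigma> = (\<Sum>k=0..n. D (Suc n) / D (Suc (n - k)) * D (n - k) powr \<sigma>)" for n
    by (simp add: cf_E_def D_def)
  have E_nn: "cf_E \<rho> n \<sigma> \<ge> 0" for n
    unfolding E_eq using posD by (intro sum_nonneg mult_nonneg_nonneg divide_nonneg_nonneg) (auto intro: less_imp_le)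
  have E_le: "cf_E \<rho> n \<sigma> \<le> C1' * D (Suc n) powr (\<sigma> / (1 + \<delta>))" for n
  proof -
    have "C1 * D (Suc n) powr (\<sigma> / (1 + \<delta>)) \<le> C1' * D (Suc n) powr (\<sigma> / (1 + \<delta>))"
      unfolding C1'_def by (intro mult_right_mono) auto
    then show ?thesis using C1[of n] E_eq[of n] by linarith
  qed
  obtain C where C: "\<And>n \<xi>. \<bar>deriv (F ^^ nat (cf_q \<rho> n)) \<xi> - 1\<bar> \<le> C * cf_E \<rho> n \<sigma>"
    using bound unfolding \<rho>_def by blast
  define Cp where "Cp = max C 0"
  have Cp0: "Cp \<ge> 0" and C1'0: "C1' \<ge> 0" by (auto simp: Cp_def C1'_def)
  have main: "\<bar>deriv (F ^^ nat (cf_q \<rho> n)) \<xi> - 1\<bar> \<le> (Cp * C1') * D (Suc n) powr (\<sigma> / (1 + \<delta>))" for n \<xi>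
  proof -
    have "\<bar>deriv (F ^^ nat (cf_q \<rho> n)) \<xi> - 1\<bar> \<le> C * cf_E \<rho> n \<sigma>" by (rule C)
    also have "\<dots> \<le> Cp * cf_E \<rho> n \<sigma>" unfolding Cp_def using E_nn[of n] by (intro mult_right_mono) auto
    also have "\<dots> \<le> Cp * (C1' * D (Suc n) powr (\<sigma> / (1 + \<delta>)))" using Cp0 E_le by (intro mult_left_mono)
    finally show ?thesis by (simp add: mult.assoc)
  qed
  have part1: "\<exists>C'. \<forall>n \<xi>. \<bar>deriv (F ^^ nat (cf_q (rotation_number F) n)) \<xi> - 1\<bar>
                    \<le> C' * cf_Delta (rotation_number F) n powr (\<sigma> / (1 + \<delta>))"
    using main unfolding \<rho>_def D_def cf_Delta_def by blast
  have part2: "h \<in> holder_class (max 0 (\<sigma> - \<delta>))"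
  proof (cases "\<sigma> \<le> \<delta>")
    case True
    then have "max 0 (\<sigma> - \<delta>) = 0" by simp
    then show ?thesis using h_cont by (simp add: holder_class_def)
  next
    case False
    then have mx: "max 0 (\<sigma> - \<delta>) = \<sigma> - \<delta>" "\<sigma> - \<delta> \<noteq> 0" by auto
    obtain Mh where Mh: "\<And>x. h x \<le> Mh" using h_bound by blast
    have Mh0: "Mh \<ge> 0" using Mh[of 0] h_pos[of 0] by simp
    define K where "K = Mh * (Cp * C1')"
    have K0: "K \<ge> 0" using Mh0 Cp0 C1'0 by (simp add: K_def)
    have gbd: "\<bar>gg x\<bar> \<le> Mh" for x using Mh[of "Hi x"] h_pos[of "Hi x"] by (simp add: gg_def)
    have shift: "\<bar>gg (v + D i) - gg v\<bar> \<le> K * D i powr (\<sigma> / (1 + \<delta>))" if i1: "i \<ge> 1" for i v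
    proof -
      obtain n where i: "i = Suc n" using i1 by (cases i) auto
      define q where "q = snd (cf_pq \<rho> (Suc n))"
      define p where "p = fst (cf_pq \<rho> (Suc n))"
      have q1: "q \<ge> 1" using cf_Q_props[OF irr r0 r1, of n] by (simp add: cfQ_def q_def)
      have cq: "cf_q \<rho> n = q" by (simp add: cf_q_def q_def)
      define e where "e = of_int q * \<rho> - of_int p"
      have ae: "\<bar>e\<bar> = D i" by (simp add: e_def D_def cf_Delta_sh_def i p_def q_def)
      have key: "\<bar>gg (w + e) - gg w\<bar> \<le> K * D i powr (\<sigma> / (1 + \<delta>))" for w
      proof -
        define \<xi> where "\<xi> = Hi w"
        define N where "N = nat q"
        have rN: "real N = of_int q" using q1 by (simp add: N_def)
        have d: "\<bar>h \<xi> / h ((F ^^ N) \<xi>) - 1\<bar> \<le> (Cp * C1') * D i powr (\<sigma> / (1 + \<delta>))"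
          using main[of n \<xi>] unfolding cq deriv_Fn N_def i .
        have "\<bar>h \<xi> - h ((F ^^ N) \<xi>)\<bar> = h ((F ^^ N) \<xi>) * \<bar>h \<xi> / h ((F ^^ N) \<xi>) - 1\<bar>"
          using h_pos[of "(F ^^ N) \<xi>"] by (simp add: field_simps abs_mult_pos' abs_div)
        also have "\<dots> \<le> Mh * ((Cp * C1') * D i powr (\<sigma> / (1 + \<delta>)))"
          using d Mh[of "(F ^^ N) \<xi>"] h_pos[of "(F ^^ N) \<xi>"] by (intro mult_mono) auto
        finally have hb: "\<bar>h \<xi> - h ((F ^^ N) \<xi>)\<bar> \<le> K * D i powr (\<sigma> / (1 + \<delta>))"
          by (simp add: K_def mult.assoc)
        define k where "k = \<lfloor>\<kappa>\<rfloor>"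
        have kap: "\<kappa> = \<rho> + of_int k" using rho_eq by (simp add: frac_def k_def)
        have "H ((F ^^ N) \<xi>) = w + real N * \<kappa>" by (simp add: H_iter \<xi>_def HHi)
        also have "\<dots> = (w + e) + of_int (p + q * k)"
          by (simp add: rN kap e_def algebra_simps)
        finally have Heq: "H ((F ^^ N) \<xi>) = (w + e) + of_int (p + q * k)" .
        have "gg (w + e) = gg ((w + e) + of_int (p + q * k))"
          by (rule per_int[of gg, OF gg_per, symmetric])
        also have "\<dots> = h ((F ^^ N) \<xi>)" by (simp only: Heq[symmetric] gg_H)
        finally have g1: "gg (w + e) = h ((F ^^ N) \<xi>)" .
        have g2: "gg w = h \<xi>" by (simp add: gg_def \<xi>_def)
        show ?thesis using hb g1 g2 by (simp add: abs_minus_commute)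
      qed
      show ?thesis
      proof (cases "e \<ge> 0")
        case True
        then have "e = D i" using ae by simp
        then show ?thesis using key[of v] by simp
      next
        case False
        then have "e = - D i" using ae by simp
        then show ?thesis using key[of "v + D i"] by (simp add: abs_minus_commute)
      qed
    qed
    interpret hs: holder_setup D c \<delta> \<sigma> K Mh gg
    proof
      show "\<And>m. D m > 0" by (rule posD)
      show "\<And>m. D (Suc m) \<le> D m" by (rule decD)
      show "\<And>m. D (Suc (Suc m)) \<le> D m / 2" by (rule halfD)
      show "\<And>m. D (Suc m) \<ge> c * D m powr (1 + \<delta>)" by (rule c(2))
      show "c > 0" by (rule c(1))
      show "\<delta> \<ge> 0" by (rule delta)
      show "\<delta> < \<sigma>" using False by simp
      show "\<sigma> < 1 + \<delta>" by (rule sigma(2))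
      show "K \<ge> 0" by (rule K0)
      show "\<And>x. isCont gg x" by (rule gg_cont)
      show "\<And>x. \<bar>gg x\<bar> \<le> Mh" by (rule gbd)
      show "\<And>i v. i \<ge> 1 \<Longrightarrow> \<bar>gg (v + D i) - gg v\<bar> \<le> K * D i powr (\<sigma> / (1 + \<delta>))"
        by (rule shift)
    qed
    define A' where "A' = max hs.A 0"
    have "\<bar>h x - h y\<bar> \<le> (A' * Mh powr (\<sigma> - \<delta>)) * \<bar>x - y\<bar> powr (\<sigma> - \<delta>)" for x y
    proof -
      have "\<bar>h x - h y\<bar> = \<bar>gg (H x) - gg (H y)\<bar>" by (simp add: gg_H)
      also have "\<dots> \<le> hs.A * \<bar>H x - H y\<bar> powr hs.\<beta>" by (rule hs.holder)
      also have "\<dots> \<le> A' * \<bar>H x - H y\<bar> powr hs.\<beta>" unfolding A'_def by (intro mult_right_mono) auto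
      also have "\<dots> \<le> A' * (Mh * \<bar>x - y\<bar>) powr hs.\<beta>"
        using H_lip[OF Mh, of x y] hs.beta_pos by (intro mult_left_mono powr_mono2) (auto simp: A'_def)
      also have "\<dots> = (A' * Mh powr (\<sigma> - \<delta>)) * \<bar>x - y\<bar> powr (\<sigma> - \<delta>)"
        using Mh0 by (simp add: hs.\<beta>_def powr_mult)
      finally show ?thesis .
    qed
    then show ?thesis unfolding holder_class_def using mx by auto
  qed
  show ?thesis using part1 part2 by blast
qed


end
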